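(* Let $G=(G_t)_{t\geq 0}$, $G_t=(V_t,E_t)$, be a dynamic graph generated by D3G3 (with arbitrary parameters $d$, $S_S$, $S_C$ and arbitrary non-null seed graph $G_0$). Write $n_t=|V_t|$ and let $\mathcal{N}^V_t$ denote the vertices nervousness at time $t$. If for all $t>0$ we have $n_t>0$ and $\mathcal{N}^V_t>0$, then $G$ is sustainable.
   Context: Let $\mathbb{T}=[0,1)^2$ be the unit torus (opposite sides identified) with its toroidal Euclidean distance $\mathrm{dist}$. A geometric graph with threshold $d$ on a finite set $V$ of points of $\mathbb{T}$ has edge set $E=\{\{u,v\}: u\neq v\in V,\ \mathrm{dist}(u,v)\leq d\}$. D3G3 (Degree-Driven Dynamic Geometric Graph Generator) takes parameters $d\in(0,\sqrt2/2)$, two sets $S_S,S_C$ of non-negative integers, and a non-null seed geometric graph $G_0$. Given $G_t=(V_t,E_t)$, the graph $G_{t+1}$ is obtained by applying simultaneously to every $v\in V_t$ (with $\deg(v)$ its degree in $G_t$): (conservation rule) $v\in V_{t+1}$, at the same position, iff $\deg(v)\in S_S$; (creation rule) if $\deg(v)\in S_C$, a brand new vertex (distinct from all vertices ever present) is added to $V_{t+1}$ at a position chosen uniformly at random in $\mathbb{T}$, independently of everything else. $V_{t+1}$ contains no other vertices, and $E_{t+1}$ is given by the geometric rule with threshold $d$. The vertices nervousness is $\mathcal{N}^V_t=\frac{|V_{t+1}\triangle V_t|}{|V_{t+1}\cup V_t|}$, where $A\triangle B=(A\cup B)\setminus(A\cap B)$. A dynamic graph $G$ is sustainable if neither of the following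 holds: (1) there is $T\in\mathbb{N}$ with $G_t=(\emptyset,\emptyset)$ for all $t\geq T$; (2) there are $T\in\mathbb{N}$ and $k\geq1$ with $G_t=G_{t+k}$ for all $t\geq T$. *)

theory Defs
  imports Complex_Main
begin

text \<open>Points of the unit torus are represented by their coordinates in [0,1)^2.\<close>
definition in_torus :: "real \<times> real \<Rightarrow> bool" where
  "in_torus p \<longleftrightarrow> 0 \<le> fst p \<and> fst p < 1 \<and> 0 \<le> snd p \<and> snd p < 1"

text \<open>Toroidal Euclidean distance on [0,1)^2 with opposite sides identified.\<close>
definition tdist :: "real \<times> real \<Rightarrow> real \<times> real \<Rightarrow> real" where
  "tdist p q = sqrt ((min \<bar>fst p - fst q\<bar> (1 - \<bar>fst p - fst q\<bar>))\<^sup>2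
                   + (min \<bar>snd p - snd q\<bar> (1 - \<bar>snd p - snd q\<bar>))\<^sup>2)"

definition gedges :: "real \<Rightarrow> ('v \<Rightarrow> real \<times> real) \<Rightarrow> 'v set \<Rightarrow> 'v set set" where
  "gedges d pos A = {{u, v} | u v. u \<in> A \<and> v \<in> A \<and> u \<noteq> v \<and> tdist (pos u) (pos v) \<le> d}"

definition gdeg :: "real \<Rightarrow> ('v \<Rightarrow> real \<times> real) \<Rightarrow> 'v set \<Rightarrow> 'v \<Rightarrow> nat" where
  "gdeg d pos A v = card {u \<in> A. {v, u} \<in> gedges d pos A}"

text \<open>A (sample path of a) D3G3 run: V t is the vertex set at time t, pos the
  (time-independent) position of each vertex, child t v the brand new vertex created
  by v at step t (when deg v is in SC).\<close>
definition d3g3_run ::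
  "real \<Rightarrow> nat set \<Rightarrow> nat set \<Rightarrow> ('v \<Rightarrow> real \<times> real) \<Rightarrow> (nat \<Rightarrow> 'v set)
     \<Rightarrow> (nat \<Rightarrow> 'v \<Rightarrow> 'v) \<Rightarrow> bool" where
  "d3g3_run d SS SC pos V child \<longleftrightarrow>
     0 < d \<and> d < sqrt 2 / 2 \<and>
     finite (V 0) \<and> V 0 \<noteq> {} \<and>
     (\<forall>v. in_torus (pos v)) \<and>
     (\<forall>t. V (Suc t) = {v \<in> V t. gdeg d pos (V t) v \<in> SS}
                     \<union> child t ` {v \<in> V t. gdeg d pos (V t) v \<in> SC}) \<and>
     (\<forall>t. inj_on (child t) {v \<in> V t. gdeg d pos (V t) v \<in> SC}) \<and>
     (\<forall>t v s. v \<in> V t \<and> gdeg d pos (V t) v \<in> SC \<and> s \<le> t \<longrightarrow> child t v \<notin> V s)"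

definition graph_at :: "real \<Rightarrow> ('v \<Rightarrow> real \<times> real) \<Rightarrow> (nat \<Rightarrow> 'v set) \<Rightarrow> nat
     \<Rightarrow> 'v set \<times> 'v set set" where
  "graph_at d pos V t = (V t, gedges d pos (V t))"

definition vertex_nervousness :: "(nat \<Rightarrow> 'v set) \<Rightarrow> nat \<Rightarrow> real" where
  "vertex_nervousness V t =
     real (card ((V (Suc t) \<union> V t) - (V (Suc t) \<inter> V t))) / real (card (V (Suc t) \<union> V t))"

definition sustainable :: "(nat \<Rightarrow> 'a set \<times> 'b set) \<Rightarrow> bool" where
  "sustainable G \<longleftrightarrow>
     \<not> (\<exists>T. \<forall>t\<ge>T. G t = ({}, {})) \<and>
     \<not> (\<exists>T k. k \<ge> 1 \<and> (\<forall>t\<ge>T. G t = G (t + k)))"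

end

theory Submission
  imports Defs
begin

theorem theorem1:
  fixes d :: real and SS SC :: "nat set" and pos :: "'v \<Rightarrow> real \<times> real"
    and V :: "nat \<Rightarrow> 'v set" and child :: "nat \<Rightarrow> 'v \<Rightarrow> 'v"
  assumes run: "d3g3_run d SS SC pos V child"
    and pos_n: "\<forall>t>0. card (V t) > 0"
    and pos_nerv: "\<forall>t>0. vertex_nervousness V t > 0"
  shows "sustainable (graph_at d pos V)"
proof -
  have step: "\<And>t. V (Suc t) = {v \<in> V t. gdeg d pos (V t) v \<in> SS}
                     \<union> child t ` {v \<in> V t. gdeg d pos (V t) v \<in> SC}"
    using run unfolding d3g3_run_def by blast
  have fresh: "\<And>t v s. v \<in> V t \<Longrightarrow> gdeg d pos (V t) v \<in> SC \<Longrightarrow> s \<le> t \<Longrightarrow> child t v \<notin> V s"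
    using run unfolding d3g3_run_def by blast
  have A: "\<not> (\<exists>T. \<forall>t\<ge>T. graph_at d pos V t = ({}, {}))"
  proof
    assume "\<exists>T. \<forall>t\<ge>T. graph_at d pos V t = ({}, {})"
    then obtain T where h: "\<forall>t\<ge>T. graph_at d pos V t = ({}, {})" by blast
    have "V (Suc T) = {}" using h[rule_format, of "Suc T"] by (simp add: graph_at_def)
    moreover have "card (V (Suc T)) > 0" using pos_n by simp
    ultimately show False by simp
  qed
  have B: "\<not> (\<exists>T k. k \<ge> 1 \<and> (\<forall>t\<ge>T. graph_at d pos V t = graph_at d pos V (t + k)))"
  proof
    assume "\<exists>T k. k \<ge> 1 \<and> (\<forall>t\<ge>T. graph_at d pos V t = graph_at d pos V (t + k))"
    then obtain T k where k: "k \<ge> 1" and h: "\<forall>t\<ge>T. graph_at d pos V t = graph_at d pos V (t + k)"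
      by blast
    have per: "V t = V (t + k)" if "t \<ge> T" for t
      using h[rule_format, OF that] unfolding graph_at_def by (rule Pair_inject)
    have dec: "V (Suc t) \<subseteq> V t" if "t \<ge> T + k" for t
    proof
      fix x assume x: "x \<in> V (Suc t)"
      show "x \<in> V t"
      proof (rule ccontr)
        assume "x \<notin> V t"
        with x step[of t] obtain v where v: "v \<in> V t" "gdeg d pos (V t) v \<in> SC" "x = child t v"
          by auto
        have "V (Suc t - k) = V (Suc t - k + k)" using per[of "Suc t - k"] that by fastforce
        also have "Suc t - k + k = Suc t" using that k by simp
        finally have "x \<in> V (Suc t - k)" using x by simp
        moreover have "Suc t - k \<le> t" using k by simp
        ultimately show False using fresh[OF v(1) v(2)] v(3) by blast
      qed
    qed
    have chain: "V (T + k + 1 + j) \<subseteq> V (T + k + 1)" for j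
    proof (induction j)
      case 0 then show ?case by simp
    next
      case (Suc j)
      have "V (Suc (T + k + 1 + j)) \<subseteq> V (T + k + 1 + j)" by (rule dec) simp
      then show ?case using Suc by simp
    qed
    have "V (T + k) = V (T + k + k)" using per[of "T + k"] by simp
    also have "T + k + k = T + k + 1 + (k - 1)" using k by simp
    finally have "V (T + k) \<subseteq> V (Suc (T + k))" using chain[of "k - 1"] by simp
    moreover have "V (Suc (T + k)) \<subseteq> V (T + k)" by (rule dec) simp
    ultimately have eq: "V (Suc (T + k)) = V (T + k)" by blast
    have "vertex_nervousness V (T + k) = 0" unfolding vertex_nervousness_def eq by simp
    moreover have "vertex_nervousness V (T + k) > 0" using pos_nerv k by simp
    ultimately show False by simp
  qed
  show ?thesis unfolding sustainable_def using A B by blast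
qed

end
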